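(* Let $C_0>0$. (i) For any linear spaces $S_D,S_{D'}$ of functions $\mathcal{X}\to\mathbb{R}$ of dimensions $D$ and $D'$, and every $x\ge0$, $$\mathbb{P}\Big(\sup_{u\in (S_D\cap\mathbb{L}_\infty(C_0))+(S_{D'}\cap\mathbb{L}_\infty(C_0))}\frac{\langle\vec\varepsilon,u\rangle_n}{\|u\|_n}>\sqrt{\frac{D+D'}{4n}}+\sqrt{\frac{5x}{n}}\Big)\le\exp(-x).$$ (ii) Let $\{L_m\}_{m\in\mathcal{M}}$ be positive numbers with $\Sigma=\sum_{m\in\mathcal{M}}\exp(-L_mD_m)<\infty$. For $\xi>0$ and $m\in\mathcal{M}$ let $$\Omega_\xi(m)=\bigcap_{m'\in\mathcal{M}}\Big\{\sup_{u\in(\mathcal{S}_m\cap\mathbb{L}_\infty(C_0))+(\mathcal{S}_{m'}\cap\mathbb{L}_\infty(C_0))}\frac{\langle\vec\varepsilon,u\rangle_n}{\|u\|_n}\le\sqrt{\frac{D_m+D_{m'}}{4n}}+\sqrt{\frac{5(L_{m'}D_{m'}+\xi)}{n}}\Big\}.$$ Then $\mathbb{P}(\Omega_\xi(m))\ge1-\Sigma\exp(-\xi)$.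
   Context: Observations $(Y_1,x_1),\dots,(Y_n,x_n)\in\{0,1\}\times\mathcal{X}$, deterministic $x_i$, independent $Y_i$ with $\mathbb{E}_{f_0}(Y_i)=\pi_{f_0}(x_i)$, $\pi_f(x)=e^{f(x)}/(1+e^{f(x)})$. $\varepsilon_i=Y_i-\mathbb{E}_{f_0}(Y_i)$, $\vec\varepsilon=(\varepsilon_1,\dots,\varepsilon_n)$, $\langle\vec\varepsilon,u\rangle_n=\frac1n\sum_{i=1}^n\varepsilon_iu(x_i)$, $\|u\|_n^2=\frac1n\sum_i u(x_i)^2$ (suprema are over $u$ with $\|u\|_n\neq0$). A dictionary $\{\phi_1,\dots,\phi_M\}$ is fixed; $\mathcal{M}$ is the set of subsets $m\subset\{1,\dots,M\}$, $\mathcal{S}_m=\{\sum_{j\in m}\beta_j\phi_j\}$, $D_m=\dim\mathrm{span}\{\phi_j,j\in m\}$. $\mathbb{L}_\infty(C_0)=\{f:\max_{1\le i\le n}|f(x_i)|\le C_0\}$. *)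

theory Defs
  imports "HOL-Analysis.Analysis" "HOL-Probability.Probability" "HOL-Library.Function_Algebras"
begin

definition fscale :: "real \<Rightarrow> ('x \<Rightarrow> real) \<Rightarrow> ('x \<Rightarrow> real)" where
  "fscale c f = (\<lambda>z. c * f z)"

interpretation fvs: vector_space "fscale :: real \<Rightarrow> ('x \<Rightarrow> real) \<Rightarrow> ('x \<Rightarrow> real)"
  by unfold_locales (auto simp: fscale_def fun_eq_iff algebra_simps)

definition lin_space_dim :: "('x \<Rightarrow> real) set \<Rightarrow> nat \<Rightarrow> bool" where
  "lin_space_dim S D \<longleftrightarrow> fvs.subspace S \<and> (\<exists>B. finite B \<and> S = fvs.span B) \<and> fvs.dim S = D"

definition logistic :: "real \<Rightarrow> real" where
  "logistic t = exp t / (1 + exp t)"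

text \<open>Law of the sample (Y_0,...,Y_{n-1}): independent Bernoulli(pi_{f0}(x_i)); Y_i = 1 iff omega i.\<close>
definition sample_law :: "nat \<Rightarrow> (nat \<Rightarrow> 'x) \<Rightarrow> ('x \<Rightarrow> real) \<Rightarrow> (nat \<Rightarrow> bool) pmf" where
  "sample_law n x f0 = Pi_pmf {..<n} False (\<lambda>i. bernoulli_pmf (logistic (f0 (x i))))"

definition eps :: "(nat \<Rightarrow> 'x) \<Rightarrow> ('x \<Rightarrow> real) \<Rightarrow> (nat \<Rightarrow> bool) \<Rightarrow> nat \<Rightarrow> real" where
  "eps x f0 \<omega> i = of_bool (\<omega> i) - logistic (f0 (x i))"

definition emp_inner :: "nat \<Rightarrow> (nat \<Rightarrow> 'x) \<Rightarrow> (nat \<Rightarrow> real) \<Rightarrow> ('x \<Rightarrow> real) \<Rightarrow> real" where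
  "emp_inner n x e u = (1 / real n) * (\<Sum>i<n. e i * u (x i))"

definition emp_norm :: "nat \<Rightarrow> (nat \<Rightarrow> 'x) \<Rightarrow> ('x \<Rightarrow> real) \<Rightarrow> real" where
  "emp_norm n x u = sqrt ((1 / real n) * (\<Sum>i<n. (u (x i))\<^sup>2))"

definition Linf :: "nat \<Rightarrow> (nat \<Rightarrow> 'x) \<Rightarrow> real \<Rightarrow> ('x \<Rightarrow> real) set" where
  "Linf n x C0 = {f. \<forall>i<n. \<bar>f (x i)\<bar> \<le> C0}"

definition msum :: "('x \<Rightarrow> real) set \<Rightarrow> ('x \<Rightarrow> real) set \<Rightarrow> ('x \<Rightarrow> real) set" where
  "msum A B = {a + b | a b. a \<in> A \<and> b \<in> B}"

text \<open>sup over u in A with ||u||_n <> 0 of <eps,u>_n/||u||_n, in the extended reals (empty sup = -infinity).\<close>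
definition sup_ratio :: "nat \<Rightarrow> (nat \<Rightarrow> 'x) \<Rightarrow> (nat \<Rightarrow> real) \<Rightarrow> ('x \<Rightarrow> real) set \<Rightarrow> ereal" where
  "sup_ratio n x e A = (SUP u\<in>{u\<in>A. emp_norm n x u \<noteq> 0}. ereal (emp_inner n x e u / emp_norm n x u))"

definition Smodel :: "(nat \<Rightarrow> 'x \<Rightarrow> real) \<Rightarrow> nat set \<Rightarrow> ('x \<Rightarrow> real) set" where
  "Smodel \<phi> m = {(\<lambda>z. \<Sum>j\<in>m. \<beta> j * \<phi> j z) | \<beta>. True}"

definition Dm :: "(nat \<Rightarrow> 'x \<Rightarrow> real) \<Rightarrow> nat set \<Rightarrow> nat" where
  "Dm \<phi> m = fvs.dim (fvs.span (\<phi> ` m))"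

end

theory Submission
  imports Defs "HOL-Probability.Hoeffding"
begin


abbreviation "NN \<equiv> density lborel std_normal_density"

lemma nn_integral_normal_density: assumes "s > 0" shows "(\<integral>\<^sup>+ x. ennreal (normal_density m s x) \<partial>lborel) = 1"
proof -
  have "emeasure (density lborel (normal_density m s)) (space (density lborel (normal_density m s))) = 1"
    using assms by (intro prob_space.emeasure_space_1 prob_space_normal_density)
  thus "?thesis" by (simp add: emeasure_density)
qed

lemma gauss_mgf:
  "(\<integral>\<^sup>+ g. ennreal (exp (s * g)) \<partial>NN) = ennreal (exp (s\<^sup>2 / 2))"
proof -
  have eq: "std_normal_density g * exp (s * g) = exp (s\<^sup>2/2) * normal_density s 1 g" for g
  proof -
    have "- g\<^sup>2 / 2 + s * g = s\<^sup>2/2 + (-(g - s)\<^sup>2 / 2)"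
      by (simp add: power2_eq_square field_simps)
    hence "exp (- g\<^sup>2 / 2) * exp (s * g) = exp (s\<^sup>2/2) * exp (-(g - s)\<^sup>2 / 2)"
      by (simp add: exp_add[symmetric])
    thus ?thesis by (simp add: std_normal_density_def normal_density_def)
  qed
  have "(\<integral>\<^sup>+ g. ennreal (exp (s * g)) \<partial>NN) = (\<integral>\<^sup>+ g. ennreal (std_normal_density g) * ennreal (exp (s * g)) \<partial>lborel)"
    by (subst nn_integral_density) auto
  also have "\<dots> = (\<integral>\<^sup>+ g. ennreal (exp (s\<^sup>2/2)) * ennreal (normal_density s 1 g) \<partial>lborel)"
    by (intro nn_integral_cong) (simp add: eq[symmetric] ennreal_mult'[symmetric] normal_density_nonneg)
  also have "\<dots> = ennreal (exp (s\<^sup>2/2))"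
    by (subst nn_integral_cmult) (auto simp: nn_integral_normal_density)
  finally show ?thesis .
qed

lemma gauss_sq:
  assumes "a < 1/2"
  shows "(\<integral>\<^sup>+ g. ennreal (exp (a * g\<^sup>2)) \<partial>NN) = ennreal (1 / sqrt (1 - 2*a))"
proof -
  define \<sigma> where "\<sigma> = 1 / sqrt (1 - 2*a)"
  have pos: "1 - 2*a > 0" using assms by simp
  have s2: "\<sigma>\<^sup>2 = 1 / (1 - 2*a)" using pos by (simp add: \<sigma>_def power_divide)
  have eq: "std_normal_density g * exp (a * g\<^sup>2) = \<sigma> * normal_density 0 \<sigma> g" for g
  proof -
    have "exp (- g\<^sup>2 / 2) * exp (a * g\<^sup>2) = exp (-(g - 0)\<^sup>2 / (2 * \<sigma>\<^sup>2))"
      using pos by (simp add: exp_add[symmetric] s2 field_simps)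
    moreover have "1 / sqrt (2 * pi) = \<sigma> * (1 / sqrt (2 * pi * \<sigma>\<^sup>2))"
      using pos by (simp add: \<sigma>_def real_sqrt_mult s2 real_sqrt_divide field_simps)
    ultimately show ?thesis by (simp add: std_normal_density_def normal_density_def)
  qed
  have "(\<integral>\<^sup>+ g. ennreal (exp (a * g\<^sup>2)) \<partial>NN) = (\<integral>\<^sup>+ g. ennreal (std_normal_density g) * ennreal (exp (a * g\<^sup>2)) \<partial>lborel)"
    by (subst nn_integral_density) auto
  also have "\<dots> = (\<integral>\<^sup>+ g. ennreal \<sigma> * ennreal (normal_density 0 \<sigma> g) \<partial>lborel)"
  proof (intro nn_integral_cong)
    fix g
    have "\<sigma> \<ge> 0" using pos by (simp add: \<sigma>_def)
    thus "ennreal (std_normal_density g) * ennreal (exp (a * g\<^sup>2)) = ennreal \<sigma> * ennreal (normal_density 0 \<sigma> g)"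
      by (simp only: ennreal_mult'[symmetric] ennreal_mult[symmetric] eq normal_density_nonneg)
  qed
  also have "\<dots> = ennreal \<sigma>"
    using pos by (subst nn_integral_cmult) (auto simp: nn_integral_normal_density \<sigma>_def)
  finally show ?thesis by (simp add: \<sigma>_def)
qed

lemma prob_NN: "prob_space NN"
  by (rule prob_space_normal_density) simp

interpretation NNprod: product_sigma_finite "\<lambda>_::nat. NN"
  unfolding product_sigma_finite_def using prob_space_imp_sigma_finite[OF prob_NN] by simp

abbreviation "GG K \<equiv> PiM {..<K} (\<lambda>_::nat. NN)"

lemma GG_mgf:
  "(\<integral>\<^sup>+ g. ennreal (exp (\<Sum>k<K. c k * g k)) \<partial>GG K) = ennreal (exp (\<Sum>k<K. (c k)\<^sup>2 / 2))"
proof -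
  have "(\<integral>\<^sup>+ g. ennreal (exp (\<Sum>k<K. c k * g k)) \<partial>GG K) = (\<integral>\<^sup>+ g. (\<Prod>k<K. ennreal (exp (c k * g k))) \<partial>GG K)"
    by (simp add: exp_sum prod_ennreal)
  also have "\<dots> = (\<Prod>k<K. \<integral>\<^sup>+ g. ennreal (exp (c k * g)) \<partial>NN)"
    by (rule NNprod.product_nn_integral_prod) auto
  also have "\<dots> = (\<Prod>k<K. ennreal (exp ((c k)\<^sup>2/2)))"
    by (simp add: gauss_mgf)
  also have "\<dots> = ennreal (exp (\<Sum>k<K. (c k)\<^sup>2 / 2))"
    by (simp add: exp_sum prod_ennreal)
  finally show ?thesis .
qed

lemma GG_sq:
  assumes "a < 1/2"
  shows "(\<integral>\<^sup>+ g. ennreal (exp (a * (\<Sum>k<K. (g k)\<^sup>2))) \<partial>GG K) = ennreal ((1 / sqrt (1 - 2*a)) ^ K)"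
proof -
  have "(\<integral>\<^sup>+ g. ennreal (exp (a * (\<Sum>k<K. (g k)\<^sup>2))) \<partial>GG K) = (\<integral>\<^sup>+ g. (\<Prod>k<K. ennreal (exp (a * (g k)\<^sup>2))) \<partial>GG K)"
    by (simp add: sum_distrib_left exp_sum prod_ennreal)
  also have "\<dots> = (\<Prod>k<K. \<integral>\<^sup>+ g. ennreal (exp (a * g\<^sup>2)) \<partial>NN)"
    by (rule NNprod.product_nn_integral_prod) auto
  also have "\<dots> = (\<Prod>k<K. ennreal (1 / sqrt (1 - 2*a)))"
    using assms by (simp add: gauss_sq)
  also have "\<dots> = ennreal ((1 / sqrt (1 - 2*a)) ^ K)"
    using assms by (simp add: ennreal_power)
  finally show ?thesis .
qed

lemma bern_aux:
  fixes h p :: real assumes "h \<ge> 0" "0 \<le> p" "p \<le> 1"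
  shows "exp (h * (1 - p)) * p + exp (- h * p) * (1 - p) \<le> exp (h\<^sup>2 / 8)"
proof -
  have pos: "1 + p * (exp h - 1) > 0"
  proof -
    have "exp h \<ge> 1" using assms by simp
    thus ?thesis using assms by (smt (verit) mult_nonneg_nonneg)
  qed
  have "-h * p + ln (1 + p * (exp h - 1)) \<le> h\<^sup>2 / 8"
    using Hoeffdings_lemma_aux[OF assms(1,2)] by simp
  hence "exp (-h * p + ln (1 + p * (exp h - 1))) \<le> exp (h\<^sup>2 / 8)" by simp
  also have "exp (-h * p + ln (1 + p * (exp h - 1))) = exp (-h*p) * (1 + p * (exp h - 1))"
    using pos by (simp only: exp_add exp_ln)
  also have "exp (-h*p) * (1 + p * (exp h - 1)) = exp (h * (1 - p)) * p + exp (- h * p) * (1 - p)"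
    by (simp add: algebra_simps exp_add[symmetric] exp_diff)
  finally show ?thesis by simp
qed

lemma bern_real:
  fixes c p :: real assumes "0 \<le> p" "p \<le> 1"
  shows "exp (c * (1 - p)) * p + exp (- c * p) * (1 - p) \<le> exp (c\<^sup>2 / 8)"
proof (cases "c \<ge> 0")
  case True thus ?thesis using bern_aux assms by blast
next
  case False
  have "exp ((-c) * (1 - (1-p))) * (1-p) + exp (- (-c) * (1-p)) * (1 - (1-p)) \<le> exp ((-c)\<^sup>2 / 8)"
    using False assms by (intro bern_aux) auto
  thus ?thesis by (simp add: algebra_simps)
qed

lemma bern_nn:
  fixes c p :: real assumes "0 \<le> p" "p \<le> 1"
  shows "(\<integral>\<^sup>+ b. ennreal (exp (c * (of_bool b - p))) \<partial>measure_pmf (bernoulli_pmf p)) \<le> ennreal (exp (c\<^sup>2 / 8))"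
proof -
  have "(\<integral>\<^sup>+ b. ennreal (exp (c * (of_bool b - p))) \<partial>measure_pmf (bernoulli_pmf p))
      = ennreal (exp (c * (1 - p))) * ennreal p + ennreal (exp (- c * p)) * ennreal (1 - p)"
    using assms by (subst nn_integral_bernoulli_pmf) auto
  also have "\<dots> = ennreal (exp (c * (1 - p)) * p + exp (- c * p) * (1 - p))"
    using assms by (subst ennreal_plus) (auto simp: ennreal_mult'[symmetric])
  also have "\<dots> \<le> ennreal (exp (c\<^sup>2 / 8))"
    using bern_real[OF assms] by (rule ennreal_leI)
  finally show ?thesis .
qed

lemma logistic_bounds: "0 \<le> logistic t" "logistic t \<le> 1"
  unfolding logistic_def by (auto simp: add_pos_pos less_imp_le)

lemma subgauss_sample:
  "(\<integral>\<^sup>+ \<omega>. ennreal (exp (\<Sum>i<n. a i * eps x f0 \<omega> i)) \<partial>measure_pmf (sample_law n x f0))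
     \<le> ennreal (exp ((\<Sum>i<n. (a i)\<^sup>2) / 8))"
proof -
  let ?p = "\<lambda>i. logistic (f0 (x i))"
  have "(\<integral>\<^sup>+ \<omega>. ennreal (exp (\<Sum>i<n. a i * eps x f0 \<omega> i)) \<partial>measure_pmf (sample_law n x f0))
      = (\<integral>\<^sup>+ \<omega>. (\<Prod>i<n. (\<lambda>i b. ennreal (exp (a i * (of_bool b - ?p i)))) i (\<omega> i)) \<partial>measure_pmf (sample_law n x f0))"
    by (simp add: exp_sum prod_ennreal eps_def)
  also have "\<dots> = (\<Prod>i<n. \<integral>\<^sup>+ b. ennreal (exp (a i * (of_bool b - ?p i))) \<partial>measure_pmf (bernoulli_pmf (?p i)))"
    unfolding sample_law_def by (rule nn_integral_prod_Pi_pmf) simp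
  also have "\<dots> \<le> (\<Prod>i<n. ennreal (exp ((a i)\<^sup>2 / 8)))"
    by (intro prod_mono_ennreal bern_nn logistic_bounds)
  also have "\<dots> = ennreal (exp ((\<Sum>i<n. (a i)\<^sup>2) / 8))"
    by (simp add: exp_sum prod_ennreal sum_divide_distrib)
  finally show ?thesis .
qed

lemma finite_set_sample: "finite (set_pmf (sample_law n x f0))"
proof -
  have "set_pmf (sample_law n x f0) \<subseteq> {f. \<forall>i. i \<notin> {..<n} \<longrightarrow> f i = False}"
    unfolding sample_law_def by (rule set_Pi_pmf_subset) simp
  also have "\<dots> \<subseteq> (\<lambda>S i. i \<in> S) ` Pow {..<n}"
  proof
    fix f :: "nat \<Rightarrow> bool" assume "f \<in> {f. \<forall>i. i \<notin> {..<n} \<longrightarrow> f i = False}"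
    hence "f = (\<lambda>i. i \<in> {i. f i})" "{i. f i} \<in> Pow {..<n}" by auto
    thus "f \<in> (\<lambda>S i. i \<in> S) ` Pow {..<n}" by blast
  qed
  finally show ?thesis by (rule finite_subset) simp
qed

lemma sum_delta_lt: "x < (K::nat) \<Longrightarrow> (\<Sum>l<K. if l = x then c else (0::real)) = c"
  by simp

lemma orth_sum:
  fixes K n :: nat and w :: "nat \<Rightarrow> nat \<Rightarrow> real" and g :: "nat \<Rightarrow> real"
  assumes orth: "\<forall>k<K. \<forall>l<K. (\<Sum>i<n. w k i * w l i) = (if k = l then 1 else (0::real))"
  shows "(\<Sum>i<n. (\<Sum>k<K. g k * w k i)\<^sup>2) = (\<Sum>k<K. (g k)\<^sup>2)"
proof -
  have "(\<Sum>i<n. (\<Sum>k<K. g k * w k i)\<^sup>2) = (\<Sum>i<n. \<Sum>k<K. \<Sum>l<K. g k * g l * (w k i * w l i))"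
    by (simp add: power2_eq_square sum_product algebra_simps)
  also have "\<dots> = (\<Sum>k<K. \<Sum>l<K. g k * g l * (\<Sum>i<n. w k i * w l i))"
    by (simp add: sum_distrib_left sum.swap[of _ "{..<n}"])
  also have "\<dots> = (\<Sum>k<K. \<Sum>l<K. g k * g l * (if k = l then 1 else 0))"
    using orth by (intro sum.cong refl) auto
  also have "\<dots> = (\<Sum>k<K. \<Sum>l<K. (if l = k then g k * g k else 0))"
    by (intro sum.cong refl) auto
  also have "\<dots> = (\<Sum>k<K. (g k)\<^sup>2)"
    by (intro sum.cong refl) (simp add: power2_eq_square sum_delta_lt)
  finally show ?thesis .
qed

lemma mgf_quad:
  fixes K n :: nat and w :: "nat \<Rightarrow> nat \<Rightarrow> real"
  assumes orth: "\<forall>k<K. \<forall>l<K. (\<Sum>i<n. w k i * w l i) = (if k = l then 1 else (0::real))"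
    and lam: "0 \<le> lam" "lam < 2"
  shows "(\<integral>\<^sup>+ \<omega>. ennreal (exp (lam * (\<Sum>k<K. (\<Sum>i<n. w k i * eps x f0 \<omega> i)\<^sup>2))) \<partial>measure_pmf (sample_law n x f0))
     \<le> ennreal ((1 / sqrt (1 - lam / 2)) ^ K)"
proof -
  define P where "P = sample_law n x f0"
  define s where "s = sqrt (2 * lam)"
  have s2: "s\<^sup>2 = 2 * lam" using lam by (simp add: s_def)
  define Y where "Y k \<omega> = (\<Sum>i<n. w k i * eps x f0 \<omega> i)" for k \<omega>
  define F where "F \<omega> g = ennreal (exp (\<Sum>k<K. (s * Y k \<omega>) * g k))" for \<omega> g
  have Fm: "F \<omega> \<in> borel_measurable (GG K)" for \<omega> unfolding F_def by measurable
  have pt: "ennreal (exp (lam * (\<Sum>k<K. (Y k \<omega>)\<^sup>2))) = (\<integral>\<^sup>+ g. F \<omega> g \<partial>GG K)" for \<omega>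
  proof -
    have "(\<integral>\<^sup>+ g. F \<omega> g \<partial>GG K) = ennreal (exp (\<Sum>k<K. (s * Y k \<omega>)\<^sup>2 / 2))"
      unfolding F_def by (rule GG_mgf)
    also have "(\<Sum>k<K. (s * Y k \<omega>)\<^sup>2 / 2) = lam * (\<Sum>k<K. (Y k \<omega>)\<^sup>2)"
      by (simp add: power_mult_distrib s2 sum_distrib_left)
    finally show ?thesis by simp
  qed
  have fin: "finite (set_pmf P)" unfolding P_def by (rule finite_set_sample)
  have "(\<integral>\<^sup>+ \<omega>. ennreal (exp (lam * (\<Sum>k<K. (Y k \<omega>)\<^sup>2))) \<partial>measure_pmf P)
      = (\<Sum>\<omega>\<in>set_pmf P. (\<integral>\<^sup>+ g. F \<omega> g \<partial>GG K) * pmf P \<omega>)"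
    by (subst nn_integral_measure_pmf_finite[OF fin]) (auto simp: pt)
  also have "\<dots> = (\<Sum>\<omega>\<in>set_pmf P. (\<integral>\<^sup>+ g. F \<omega> g * pmf P \<omega> \<partial>GG K))"
    by (intro sum.cong refl nn_integral_multc[symmetric] Fm)
  also have "\<dots> = (\<integral>\<^sup>+ g. (\<Sum>\<omega>\<in>set_pmf P. F \<omega> g * pmf P \<omega>) \<partial>GG K)"
    by (rule nn_integral_sum[symmetric]) (auto intro!: borel_measurable_times_ennreal Fm)
  also have "\<dots> = (\<integral>\<^sup>+ g. (\<integral>\<^sup>+ \<omega>. F \<omega> g \<partial>measure_pmf P) \<partial>GG K)"
    by (intro nn_integral_cong) (simp add: nn_integral_measure_pmf_finite[OF fin])
  also have "\<dots> \<le> (\<integral>\<^sup>+ g. ennreal (exp ((lam / 4) * (\<Sum>k<K. (g k)\<^sup>2))) \<partial>GG K)"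
  proof (intro nn_integral_mono)
    fix g :: "nat \<Rightarrow> real"
    define a where "a i = (\<Sum>k<K. g k * w k i) * s" for i
    have "(\<Sum>k<K. (s * Y k \<omega>) * g k) = (\<Sum>i<n. a i * eps x f0 \<omega> i)" for \<omega>
      unfolding Y_def a_def by (simp add: sum_distrib_left sum_distrib_right sum.swap[of _ "{..<K}"] algebra_simps)
    hence "(\<integral>\<^sup>+ \<omega>. F \<omega> g \<partial>measure_pmf P) = (\<integral>\<^sup>+ \<omega>. ennreal (exp (\<Sum>i<n. a i * eps x f0 \<omega> i)) \<partial>measure_pmf P)"
      unfolding F_def by simp
    also have "\<dots> \<le> ennreal (exp ((\<Sum>i<n. (a i)\<^sup>2) / 8))"
      unfolding P_def by (rule subgauss_sample)
    also have "(\<Sum>i<n. (a i)\<^sup>2) = s\<^sup>2 * (\<Sum>k<K. (g k)\<^sup>2)"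
      unfolding a_def using orth_sum[OF orth, of g]
      by (simp add: power_mult_distrib sum_distrib_left[symmetric] mult.commute)
    finally show "(\<integral>\<^sup>+ \<omega>. F \<omega> g \<partial>measure_pmf P) \<le> ennreal (exp ((lam / 4) * (\<Sum>k<K. (g k)\<^sup>2)))"
      by (simp add: s2)
  qed
  also have "\<dots> = ennreal ((1 / sqrt (1 - 2 * (lam/4))) ^ K)"
    using lam by (intro GG_sq) simp
  finally show ?thesis unfolding P_def Y_def by simp
qed

lemma tail_quad:
  fixes K n :: nat and w :: "nat \<Rightarrow> nat \<Rightarrow> real"
  assumes orth: "\<forall>k<K. \<forall>l<K. (\<Sum>i<n. w k i * w l i) = (if k = l then 1 else (0::real))"
    and lam: "0 \<le> lam" "lam < 2"
  shows "measure_pmf.prob (sample_law n x f0) {\<omega>. r < (\<Sum>k<K. (\<Sum>i<n. w k i * eps x f0 \<omega> i)\<^sup>2)}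
     \<le> exp (- lam * r) * (1 / sqrt (1 - lam / 2)) ^ K"
proof -
  define P where "P = sample_law n x f0"
  define Q where "Q \<omega> = (\<Sum>k<K. (\<Sum>i<n. w k i * eps x f0 \<omega> i)\<^sup>2)" for \<omega>
  let ?A = "{\<omega>. r < Q \<omega>}"
  have "ennreal (measure_pmf.prob P ?A) = emeasure (measure_pmf P) ?A"
    by (simp add: measure_pmf.emeasure_eq_measure)
  also have "\<dots> = (\<integral>\<^sup>+ \<omega>. indicator ?A \<omega> \<partial>measure_pmf P)"
    by simp
  also have "\<dots> \<le> (\<integral>\<^sup>+ \<omega>. ennreal (exp (- lam * r)) * ennreal (exp (lam * Q \<omega>)) \<partial>measure_pmf P)"
  proof (intro nn_integral_mono)
    fix \<omega>
    show "indicator ?A \<omega> \<le> ennreal (exp (- lam * r)) * ennreal (exp (lam * Q \<omega>))"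
    proof (cases "r < Q \<omega>")
      case True
      hence "lam * r \<le> lam * Q \<omega>" using lam by (intro mult_left_mono) auto
      hence "1 \<le> exp (- lam * r) * exp (lam * Q \<omega>)" by (simp add: exp_add[symmetric])
      thus ?thesis using True by (simp add: ennreal_mult'[symmetric])
    qed simp
  qed
  also have "\<dots> = ennreal (exp (- lam * r)) * (\<integral>\<^sup>+ \<omega>. ennreal (exp (lam * Q \<omega>)) \<partial>measure_pmf P)"
    by (rule nn_integral_cmult) simp
  also have "\<dots> \<le> ennreal (exp (- lam * r)) * ennreal ((1 / sqrt (1 - lam / 2)) ^ K)"
    unfolding P_def Q_def by (intro mult_left_mono mgf_quad orth lam) simp
  also have "\<dots> = ennreal (exp (- lam * r) * (1 / sqrt (1 - lam / 2)) ^ K)"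
    using lam by (simp add: ennreal_mult')
  finally show ?thesis
    unfolding P_def Q_def using lam by (subst (asm) ennreal_le_iff) auto
qed

lemma chernoff_step:
  fixes mu :: real and d K :: nat
  assumes mu: "0 \<le> mu" "mu \<le> 1/2" and Kd: "K \<le> d"
    and key: "real d * mu\<^sup>2 - 2 * mu * (sqrt (real d) * sqrt (5 * t)) - 10 * mu * t \<le> - t"
    and t: "t \<ge> 0"
  shows "exp (- (2*mu) * (sqrt (real d) / 2 + sqrt (5 * t))\<^sup>2) * (1 / sqrt (1 - (2*mu) / 2)) ^ K \<le> exp (- t)"
proof -
  have pos: "1 - mu > 0" using mu by simp
  have b1: "1 \<le> 1 / sqrt (1 - mu)" using mu pos by (simp add: real_sqrt_le_1_iff)
  have E: "1 / sqrt (1 - mu) = exp (- ln (1 - mu) / 2)"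
  proof -
    have "sqrt (1 - mu) = exp (ln (1 - mu) / 2)" using pos
      by (simp add: powr_half_sqrt[symmetric] powr_def)
    thus ?thesis by (simp add: exp_minus inverse_eq_divide)
  qed
  have "(1 / sqrt (1 - mu)) ^ K \<le> (1 / sqrt (1 - mu)) ^ d"
    by (rule power_increasing[OF Kd b1])
  also have "(1 / sqrt (1 - mu)) ^ d = exp (real d * (- ln (1 - mu) / 2))"
    unfolding E by (simp only: exp_of_nat_mult[symmetric])
  finally have A: "(1 / sqrt (1 - mu)) ^ K \<le> exp (real d * (- ln (1 - mu) / 2))" .
  have lnb: "- ln (1 - mu) \<le> mu + 2 * mu\<^sup>2" using ln_one_minus_pos_lower_bound[OF mu] by simp
  have sq: "(sqrt (real d) / 2 + sqrt (5 * t))\<^sup>2 = real d / 4 + sqrt (real d) * sqrt (5 * t) + 5 * t"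
  proof -
    have "sqrt (real d) * sqrt (real d) = real d" by simp
    moreover have "sqrt (5*t) * sqrt (5*t) = 5 * t" using t by simp
    ultimately show ?thesis by (simp add: power2_eq_square algebra_simps)
  qed
  have "exp (- (2*mu) * (sqrt (real d) / 2 + sqrt (5 * t))\<^sup>2) * (1 / sqrt (1 - (2*mu) / 2)) ^ K
      \<le> exp (- (2*mu) * (sqrt (real d) / 2 + sqrt (5 * t))\<^sup>2) * exp (real d * (- ln (1 - mu) / 2))"
    using A by (intro mult_left_mono) auto
  also have "\<dots> = exp (- (2*mu) * (sqrt (real d) / 2 + sqrt (5 * t))\<^sup>2 + real d * (- ln (1 - mu) / 2))"
    by (rule exp_add[symmetric])
  also have "\<dots> \<le> exp (-t)"
  proof -
    have "real d * (- ln (1 - mu) / 2) \<le> real d * ((mu + 2 * mu\<^sup>2) / 2)"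
      using lnb by (intro mult_left_mono) auto
    hence "- (2*mu) * (sqrt (real d) / 2 + sqrt (5 * t))\<^sup>2 + real d * (- ln (1 - mu) / 2)
        \<le> real d * mu\<^sup>2 - 2 * mu * (sqrt (real d) * sqrt (5 * t)) - 10 * mu * t"
      unfolding sq by (simp add: algebra_simps power2_eq_square)
    thus ?thesis using key by simp
  qed
  finally show ?thesis .
qed

lemma chernoff_num:
  fixes d K :: nat and t :: real
  assumes Kd: "K \<le> d" and t: "t \<ge> 0"
  shows "\<exists>lam. 0 \<le> lam \<and> lam < 2 \<and>
    exp (- lam * (sqrt (real d) / 2 + sqrt (5 * t))\<^sup>2) * (1 / sqrt (1 - lam / 2)) ^ K \<le> exp (- t)"
proof (cases "t \<le> real d / 4")
  case False
  have key: "real d * (1/2)\<^sup>2 - 2 * (1/2) * (sqrt (real d) * sqrt (5 * t)) - 10 * (1/2) * t \<le> - t"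
  proof -
    have "0 \<le> sqrt (real d) * sqrt (5 * t)" using t by simp
    thus ?thesis using False by (simp add: power2_eq_square, linarith)
  qed
  show ?thesis
    by (rule exI[of _ "2 * (1/2)"]) (use chernoff_step[OF _ _ Kd key t] in simp)
next
  case True
  define mu where "mu = sqrt t / sqrt (real d)"
  have mu0: "0 \<le> mu" unfolding mu_def using t by simp
  have dmu: "real d * mu\<^sup>2 = t"
  proof (cases "d = 0")
    case True thus ?thesis using \<open>t \<le> real d / 4\<close> t by (simp add: mu_def)
  next
    case False thus ?thesis using t by (simp add: mu_def power_divide)
  qed
  have mu1: "mu \<le> 1/2"
  proof (cases "d = 0")
    case True thus ?thesis by (simp add: mu_def)
  next
    case False
    have "sqrt t \<le> sqrt (real d / 4)" using True by (rule real_sqrt_le_mono)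
    also have "sqrt (real d / 4) = sqrt (real d) / 2" by (simp add: real_sqrt_divide)
    finally have "sqrt t \<le> sqrt (real d) / 2" .
    thus ?thesis using False by (simp add: mu_def divide_le_eq)
  qed
  have cross: "2 * mu * (sqrt (real d) * sqrt (5 * t)) = 2 * sqrt 5 * t"
  proof (cases "d = 0")
    case True thus ?thesis using \<open>t \<le> real d / 4\<close> t by simp
  next
    case False thus ?thesis using t by (simp add: mu_def real_sqrt_mult)
  qed
  have s5: "sqrt 5 \<ge> (1::real)" by simp
  have h1: "2 * sqrt 5 * t \<ge> 2 * t" using s5 t by (simp add: mult_right_mono)
  have h2: "10 * mu * t \<ge> 0" using mu0 t by simp
  have key: "real d * mu\<^sup>2 - 2 * mu * (sqrt (real d) * sqrt (5 * t)) - 10 * mu * t \<le> - t"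
    unfolding dmu cross using h1 h2 by linarith
  show ?thesis
    by (rule exI[of _ "2 * mu"]) (use chernoff_step[OF mu0 mu1 Kd key t] mu0 mu1 in simp)
qed

definition orthn :: "nat \<Rightarrow> nat \<Rightarrow> (nat \<Rightarrow> nat \<Rightarrow> real) \<Rightarrow> bool" where
  "orthn n K w \<longleftrightarrow> (\<forall>k<K. \<forall>l<K. (\<Sum>i<n. w k i * w l i) = (if k = l then 1 else 0))"

definition incomb :: "nat \<Rightarrow> nat \<Rightarrow> (nat \<Rightarrow> nat \<Rightarrow> real) \<Rightarrow> (nat \<Rightarrow> real) \<Rightarrow> bool" where
  "incomb n K w v \<longleftrightarrow> (\<exists>c. \<forall>i<n. v i = (\<Sum>k<K. c k * w k i))"

lemma incomb_mono:
  assumes "incomb n K w v" "\<forall>k<K. w' k = w k"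
  shows "incomb n (Suc K) w' v"
proof -
  obtain c where c: "\<forall>i<n. v i = (\<Sum>k<K. c k * w k i)" using assms(1) unfolding incomb_def by blast
  define c' where "c' = c(K := 0)"
  have "\<forall>i<n. v i = (\<Sum>k<Suc K. c' k * w' k i)"
    using c assms(2) by (auto simp: c'_def intro!: sum.cong)
  thus ?thesis unfolding incomb_def by blast
qed

lemma gram_schmidt_exists:
  fixes vs :: "(nat \<Rightarrow> real) list"
  shows "\<exists>K w. K \<le> length vs \<and> orthn n K w \<and> (\<forall>v\<in>set vs. incomb n K w v)"
proof (induction vs)
  case Nil
  show ?case by (rule exI[of _ 0]) (auto simp: orthn_def)
next
  case (Cons v vs)
  then obtain K w where K: "K \<le> length vs" and orth: "orthn n K w" and sp: "\<forall>u\<in>set vs. incomb n K w u"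
    by blast
  define c where "c k = (\<Sum>i<n. v i * w k i)" for k
  define r where "r i = v i - (\<Sum>k<K. c k * w k i)" for i
  define N where "N = (\<Sum>i<n. (r i)\<^sup>2)"
  have rw: "(\<Sum>i<n. r i * w k i) = 0" if "k < K" for k
  proof -
    have "(\<Sum>i<n. r i * w k i) = (\<Sum>i<n. v i * w k i) - (\<Sum>i<n. (\<Sum>l<K. c l * w l i) * w k i)"
      by (simp add: r_def left_diff_distrib sum_subtractf)
    also have "(\<Sum>i<n. (\<Sum>l<K. c l * w l i) * w k i) = (\<Sum>i<n. \<Sum>l<K. c l * (w l i * w k i))"
      by (simp add: sum_distrib_right mult.assoc)
    also have "(\<Sum>i<n. v i * w k i) = c k" by (simp add: c_def)
    also have "(\<Sum>i<n. \<Sum>l<K. c l * (w l i * w k i)) = (\<Sum>l<K. c l * (\<Sum>i<n. w l i * w k i))"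
      by (simp add: sum.swap[of _ "{..<n}"] sum_distrib_left)
    also have "\<dots> = (\<Sum>l<K. if l = k then c k else 0)"
      using orth that unfolding orthn_def by (intro sum.cong refl) auto
    also have "\<dots> = c k" using that by (simp add: sum_delta_lt)
    finally show ?thesis by simp
  qed
  show ?case
  proof (cases "N = 0")
    case True
    have "r i = 0" if "i < n" for i
    proof -
      have "(r i)\<^sup>2 = 0" using True that unfolding N_def
        by (subst (asm) sum_nonneg_eq_0_iff) auto
      thus ?thesis by simp
    qed
    hence "incomb n K w v" unfolding incomb_def r_def by (intro exI[of _ c]) auto
    thus ?thesis using K orth sp by (intro exI[of _ K] exI[of _ w]) auto
  next
    case False
    have Npos: "N > 0" using False unfolding N_def by (simp add: order_le_neq_trans sum_nonneg)
    define w' where "w' = w(K := (\<lambda>i. r i / sqrt N))"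
    have orth': "orthn n (Suc K) w'"
      unfolding orthn_def
    proof (intro allI impI)
      fix k l assume k: "k < Suc K" and l: "l < Suc K"
      have rr: "(\<Sum>i<n. r i / sqrt N * (r i / sqrt N)) = 1"
      proof -
        have "(\<Sum>i<n. r i / sqrt N * (r i / sqrt N)) = (\<Sum>i<n. (r i)\<^sup>2) / N"
          using Npos by (simp add: sum_divide_distrib power2_eq_square)
        thus ?thesis using Npos by (simp add: N_def)
      qed
      have rk: "(\<Sum>i<n. r i / sqrt N * w k i) = 0" if "k < K" for k
        using rw[OF that] by (simp add: sum_divide_distrib[symmetric])
      have kr: "(\<Sum>i<n. w k i * (r i / sqrt N)) = 0" if "k < K" for k
        using rk[OF that] by (simp add: mult.commute)
      show "(\<Sum>i<n. w' k i * w' l i) = (if k = l then 1 else 0)"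
      proof (cases "k = K")
        case True
        thus ?thesis using l rr rk by (cases "l = K") (auto simp: w'_def)
      next
        case False
        hence "k < K" using k by simp
        thus ?thesis using l kr orth False unfolding orthn_def by (cases "l = K") (auto simp: w'_def)
      qed
    qed
    have "incomb n (Suc K) w' v"
    proof -
      define c' where "c' = c(K := sqrt N)"
      have "v i = (\<Sum>k<Suc K. c' k * w' k i)" if "i < n" for i
      proof -
        have "(\<Sum>k<Suc K. c' k * w' k i) = (\<Sum>k<K. c k * w k i) + sqrt N * (r i / sqrt N)"
          by (simp add: c'_def w'_def)
        also have "\<dots> = v i" using Npos by (simp add: r_def)
        finally show ?thesis by simp
      qed
      thus ?thesis unfolding incomb_def by blast
    qed
    moreover have "\<forall>u\<in>set vs. incomb n (Suc K) w' u"
      using sp by (auto intro: incomb_mono simp: w'_def)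
    ultimately show ?thesis using K orth' by (intro exI[of _ "Suc K"] exI[of _ w']) auto
  qed
qed

lemma ratio_bound:
  assumes orth: "orthn n K w" and n: "n > 0" and comb: "incomb n K w (\<lambda>i. u (x i))"
    and nz: "emp_norm n x u \<noteq> 0"
  shows "emp_inner n x e u / emp_norm n x u \<le> sqrt (\<Sum>k<K. (\<Sum>i<n. w k i * e i)\<^sup>2) / sqrt (real n)"
proof -
  obtain c where c: "\<forall>i<n. u (x i) = (\<Sum>k<K. c k * w k i)" using comb unfolding incomb_def by blast
  define Y where "Y k = (\<Sum>i<n. w k i * e i)" for k
  have inner: "(\<Sum>i<n. e i * u (x i)) = (\<Sum>k<K. c k * Y k)"
  proof -
    have "(\<Sum>i<n. e i * u (x i)) = (\<Sum>i<n. e i * (\<Sum>k<K. c k * w k i))"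
      using c by (intro sum.cong refl) auto
    also have "\<dots> = (\<Sum>k<K. c k * Y k)"
      by (simp add: Y_def sum_distrib_left sum.swap[of _ "{..<n}"] algebra_simps)
    finally show ?thesis .
  qed
  have norm2: "(\<Sum>i<n. (u (x i))\<^sup>2) = (\<Sum>k<K. (c k)\<^sup>2)"
  proof -
    have "(\<Sum>i<n. (u (x i))\<^sup>2) = (\<Sum>i<n. (\<Sum>k<K. c k * w k i)\<^sup>2)"
      using c by (intro sum.cong refl) auto
    also have "\<dots> = (\<Sum>k<K. (c k)\<^sup>2)"
      using orth unfolding orthn_def by (rule orth_sum)
    finally show ?thesis .
  qed
  define A where "A = sqrt (\<Sum>k<K. (c k)\<^sup>2)"
  have en: "emp_norm n x u = A / sqrt (real n)"
    unfolding emp_norm_def A_def norm2 by (simp add: real_sqrt_divide)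
  have A0: "A > 0"
  proof -
    have "A \<ge> 0" unfolding A_def by (simp add: sum_nonneg)
    moreover have "A \<noteq> 0" using nz en by auto
    ultimately show ?thesis by simp
  qed
  have cs: "(\<Sum>k<K. c k * Y k) \<le> A * sqrt (\<Sum>k<K. (Y k)\<^sup>2)"
  proof -
    have "(\<Sum>k<K. c k * Y k) \<le> (\<Sum>k<K. \<bar>c k\<bar> * \<bar>Y k\<bar>)"
      by (intro sum_mono) (simp add: abs_mult[symmetric])
    also have "\<dots> \<le> L2_set c {..<K} * L2_set Y {..<K}" by (rule L2_set_mult_ineq)
    finally show ?thesis by (simp add: L2_set_def A_def)
  qed
  have "emp_inner n x e u / emp_norm n x u = ((\<Sum>k<K. c k * Y k) / real n) * sqrt (real n) / A"
    unfolding emp_inner_def en inner by simp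
  also have "\<dots> \<le> (A * sqrt (\<Sum>k<K. (Y k)\<^sup>2) / real n) * sqrt (real n) / A"
    using A0 n cs by (intro divide_right_mono mult_right_mono) auto
  also have "\<dots> = sqrt (\<Sum>k<K. (Y k)\<^sup>2) / sqrt (real n)"
  proof -
    have "real n = sqrt (real n) * sqrt (real n)" by simp
    thus ?thesis using A0 n by (simp add: field_simps)
  qed
  finally show ?thesis unfolding Y_def .
qed



lemma fun_sum_apply: "(\<Sum>v\<in>B. f v) z = (\<Sum>v\<in>B. (f v :: 'x \<Rightarrow> real) z)"
  by (induction B rule: infinite_finite_induct) auto

lemma span_eval:
  assumes "finite B" "u \<in> fvs.span B"
  shows "\<exists>c. \<forall>z. u z = (\<Sum>v\<in>B. c v * (v :: 'x \<Rightarrow> real) z)"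
proof -
  from assms obtain c where "u = (\<Sum>v\<in>B. fscale (c v) v)"
    using fvs.span_finite[OF assms(1)] by auto
  hence "\<forall>z. u z = (\<Sum>v\<in>B. c v * v z)" by (simp add: fun_sum_apply fscale_def)
  thus ?thesis by blast
qed

lemma incomb_sum:
  assumes "finite BB" "\<forall>v\<in>BB. incomb n K w (g v)"
  shows "incomb n K w (\<lambda>i. \<Sum>v\<in>BB. c v * g v i)"
proof -
  from assms(2) have "\<forall>v\<in>BB. \<exists>e. \<forall>i<n. g v i = (\<Sum>k<K. e k * w k i)" unfolding incomb_def by simp
  from bchoice[OF this] obtain e where e: "\<forall>v\<in>BB. \<forall>i<n. g v i = (\<Sum>k<K. e v k * w k i)" by blast
  have *: "(\<Sum>v\<in>BB. c v * g v i) = (\<Sum>k<K. (\<Sum>v\<in>BB. c v * e v k) * w k i)" if i: "i < n" for i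
  proof -
    have "(\<Sum>v\<in>BB. c v * g v i) = (\<Sum>v\<in>BB. c v * (\<Sum>k<K. e v k * w k i))"
      using e i by (intro sum.cong refl) simp
    also have "\<dots> = (\<Sum>v\<in>BB. \<Sum>k<K. c v * (e v k * w k i))"
      by (simp add: sum_distrib_left)
    also have "\<dots> = (\<Sum>k<K. \<Sum>v\<in>BB. c v * (e v k * w k i))"
      by (rule sum.swap)
    also have "\<dots> = (\<Sum>k<K. (\<Sum>v\<in>BB. c v * e v k) * w k i)"
      by (simp add: sum_distrib_right mult.assoc)
    finally show ?thesis .
  qed
  show ?thesis unfolding incomb_def
    by (rule exI[of _ "\<lambda>k. \<Sum>v\<in>BB. c v * e v k"]) (use * in simp)
qed

lemma basis_of_lsd:
  assumes "lin_space_dim S D"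
  obtains B where "finite B" "card B = D" "S \<subseteq> fvs.span B"
proof -
  from assms obtain B0 where B0: "finite B0" "S = fvs.span B0" "fvs.dim S = D"
    unfolding lin_space_dim_def by blast
  obtain B where B: "B \<subseteq> S" "fvs.independent B" "S \<subseteq> fvs.span B" "card B = fvs.dim S"
    by (rule fvs.basis_exists)
  have "finite B" using fvs.independent_span_bound[OF B0(1) B(2)] B(1) B0(2) by auto
  thus ?thesis using that B B0 by auto
qed

lemma exists_frame:
  fixes S S' :: "('x \<Rightarrow> real) set" and x :: "nat \<Rightarrow> 'x"
  assumes "lin_space_dim S D" "lin_space_dim S' D'"
  shows "\<exists>K w. K \<le> D + D' \<and> orthn n K w \<and> (\<forall>u\<in>msum (S \<inter> L1) (S' \<inter> L2). incomb n K w (\<lambda>i. u (x i)))"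
proof -
  obtain B where B: "finite B" "card B = D" "S \<subseteq> fvs.span B" using basis_of_lsd[OF assms(1)] by blast
  obtain B' where B': "finite B'" "card B' = D'" "S' \<subseteq> fvs.span B'" using basis_of_lsd[OF assms(2)] by blast
  define BB where "BB = B \<union> B'"
  have fBB: "finite BB" using B B' by (simp add: BB_def)
  have cBB: "card BB \<le> D + D'" using card_Un_le[of B B'] B B' by (simp add: BB_def)
  obtain xs where xs: "set xs = BB" "distinct xs" using finite_distinct_list[OF fBB] by blast
  define vs where "vs = map (\<lambda>b i. b (x i)) xs"
  obtain K w where Kw: "K \<le> length vs" "orthn n K w" "\<forall>v\<in>set vs. incomb n K w v"
    using gram_schmidt_exists[of vs n] by blast
  have "length vs = card BB" using xs distinct_card[of xs] by (simp add: vs_def)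
  hence K: "K \<le> D + D'" using Kw cBB by simp
  have bb: "\<forall>v\<in>BB. incomb n K w (\<lambda>i. v (x i))" using Kw(3) xs by (auto simp: vs_def)
  have "incomb n K w (\<lambda>i. u (x i))" if u: "u \<in> msum (S \<inter> L1) (S' \<inter> L2)" for u
  proof -
    from u obtain a b where ab: "u = a + b" "a \<in> S" "b \<in> S'" unfolding msum_def by blast
    have "a \<in> fvs.span BB" using ab B fvs.span_mono[of B BB] by (auto simp: BB_def)
    moreover have "b \<in> fvs.span BB" using ab B' fvs.span_mono[of B' BB] by (auto simp: BB_def)
    ultimately have "u \<in> fvs.span BB" using ab fvs.span_add by simp
    then obtain c where c: "\<forall>z. u z = (\<Sum>v\<in>BB. c v * v z)" using span_eval[OF fBB] by blast
    have "incomb n K w (\<lambda>i. \<Sum>v\<in>BB. c v * v (x i))"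
      using incomb_sum[OF fBB, of n K w "\<lambda>v i. v (x i)" c] bb by simp
    thus ?thesis using c by simp
  qed
  thus ?thesis using K Kw by blast
qed

lemma part1:
  fixes S S' :: "('x \<Rightarrow> real) set" and x :: "nat \<Rightarrow> 'x"
  assumes n: "n > 0" and SD: "lin_space_dim S D" and SD': "lin_space_dim S' D'" and t: "t \<ge> 0"
  shows "measure_pmf.prob (sample_law n x f0)
              {\<omega>. sup_ratio n x (eps x f0 \<omega>) (msum (S \<inter> Linf n x C0) (S' \<inter> Linf n x C0))
                   > ereal (sqrt (real (D + D') / (4 * real n)) + sqrt (5 * t / real n))}
            \<le> exp (- t)"
proof -
  obtain K w where Kw: "K \<le> D + D'" "orthn n K w"
    "\<forall>u\<in>msum (S \<inter> Linf n x C0) (S' \<inter> Linf n x C0). incomb n K w (\<lambda>i. u (x i))"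
    using exists_frame[OF SD SD', of n "Linf n x C0" "Linf n x C0" x] by blast
  define d where "d = D + D'"
  define R where "R = sqrt (real d) / 2 + sqrt (5 * t)"
  define Q where "Q \<omega> = (\<Sum>k<K. (\<Sum>i<n. w k i * eps x f0 \<omega> i)\<^sup>2)" for \<omega>
  have R0: "R \<ge> 0" unfolding R_def using t by simp
  have thr: "sqrt (real (D + D') / (4 * real n)) + sqrt (5 * t / real n) = R / sqrt (real n)"
  proof -
    have a: "sqrt (real (D + D') / (4 * real n)) = sqrt (real d) / (2 * sqrt (real n))"
      unfolding d_def by (subst real_sqrt_divide) (simp add: real_sqrt_mult)
    have b: "sqrt (5 * t / real n) = sqrt (5 * t) / sqrt (real n)" by (rule real_sqrt_divide)
    show ?thesis unfolding a b R_def by (simp add: add_divide_distrib)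
  qed
  have sub: "{\<omega>. sup_ratio n x (eps x f0 \<omega>) (msum (S \<inter> Linf n x C0) (S' \<inter> Linf n x C0))
                   > ereal (sqrt (real (D + D') / (4 * real n)) + sqrt (5 * t / real n))}
          \<subseteq> {\<omega>. R\<^sup>2 < Q \<omega>}"
  proof
    fix \<omega> assume "\<omega> \<in> {\<omega>. sup_ratio n x (eps x f0 \<omega>) (msum (S \<inter> Linf n x C0) (S' \<inter> Linf n x C0))
                   > ereal (sqrt (real (D + D') / (4 * real n)) + sqrt (5 * t / real n))}"
    hence gt: "sup_ratio n x (eps x f0 \<omega>) (msum (S \<inter> Linf n x C0) (S' \<inter> Linf n x C0)) > ereal (R / sqrt (real n))"
      by (simp only: mem_Collect_eq thr)
    have le: "sup_ratio n x (eps x f0 \<omega>) (msum (S \<inter> Linf n x C0) (S' \<inter> Linf n x C0)) \<le> ereal (sqrt (Q \<omega>) / sqrt (real n))"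
      unfolding sup_ratio_def
    proof (rule SUP_least)
      fix u assume "u \<in> {u \<in> msum (S \<inter> Linf n x C0) (S' \<inter> Linf n x C0). emp_norm n x u \<noteq> 0}"
      hence u: "u \<in> msum (S \<inter> Linf n x C0) (S' \<inter> Linf n x C0)" "emp_norm n x u \<noteq> 0" by auto
      have "emp_inner n x (eps x f0 \<omega>) u / emp_norm n x u \<le> sqrt (Q \<omega>) / sqrt (real n)"
        unfolding Q_def by (rule ratio_bound[OF Kw(2) n _ u(2)]) (use Kw(3) u(1) in blast)
      thus "ereal (emp_inner n x (eps x f0 \<omega>) u / emp_norm n x u) \<le> ereal (sqrt (Q \<omega>) / sqrt (real n))"
        by simp
    qed
    have "ereal (R / sqrt (real n)) < ereal (sqrt (Q \<omega>) / sqrt (real n))" by (rule less_le_trans[OF gt le])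
    hence h: "R / sqrt (real n) < sqrt (Q \<omega>) / sqrt (real n)" by simp
    have sn: "sqrt (real n) > 0" using n by simp
    have "R < sqrt (Q \<omega>)" using h sn by (simp only: divide_less_cancel)
    hence "R\<^sup>2 < (sqrt (Q \<omega>))\<^sup>2" using R0 by (intro power_strict_mono) auto
    moreover have "Q \<omega> \<ge> 0" unfolding Q_def by (simp add: sum_nonneg)
    ultimately show "\<omega> \<in> {\<omega>. R\<^sup>2 < Q \<omega>}" by simp
  qed
  obtain lam where lam: "0 \<le> lam" "lam < 2"
    "exp (- lam * (sqrt (real d) / 2 + sqrt (5 * t))\<^sup>2) * (1 / sqrt (1 - lam / 2)) ^ K \<le> exp (- t)"
    using chernoff_num[of K d t] Kw(1) t by (auto simp: d_def)
  have "measure_pmf.prob (sample_law n x f0)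
              {\<omega>. sup_ratio n x (eps x f0 \<omega>) (msum (S \<inter> Linf n x C0) (S' \<inter> Linf n x C0))
                   > ereal (sqrt (real (D + D') / (4 * real n)) + sqrt (5 * t / real n))}
        \<le> measure_pmf.prob (sample_law n x f0) {\<omega>. R\<^sup>2 < Q \<omega>}"
    by (rule measure_pmf.finite_measure_mono[OF sub]) simp
  also have "\<dots> \<le> exp (- lam * R\<^sup>2) * (1 / sqrt (1 - lam / 2)) ^ K"
    unfolding Q_def by (rule tail_quad) (use Kw(2) lam in \<open>auto simp: orthn_def\<close>)
  also have "\<dots> \<le> exp (- t)" using lam(3) by (simp add: R_def)
  finally show ?thesis .
qed

lemma Smodel_span:
  assumes "finite m"
  shows "Smodel \<phi> m = fvs.span (\<phi> ` m)"
proof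
  show "Smodel \<phi> m \<subseteq> fvs.span (\<phi> ` m)"
  proof
    fix u assume "u \<in> Smodel \<phi> m"
    then obtain \<beta> where u: "u = (\<lambda>z. \<Sum>j\<in>m. \<beta> j * \<phi> j z)" unfolding Smodel_def by blast
    have "u = (\<Sum>j\<in>m. fscale (\<beta> j) (\<phi> j))"
      unfolding u by (rule ext) (simp add: fun_sum_apply fscale_def)
    also have "\<dots> \<in> fvs.span (\<phi> ` m)"
      by (intro fvs.span_sum fvs.span_scale fvs.span_base) auto
    finally show "u \<in> fvs.span (\<phi> ` m)" .
  qed
next
  have sub: "fvs.subspace (Smodel \<phi> m)"
    unfolding fvs.subspace_def
  proof (intro conjI ballI allI)
    show "0 \<in> Smodel \<phi> m" unfolding Smodel_def
      by (rule CollectI, rule exI[of _ "\<lambda>_. 0"]) (auto simp: fun_eq_iff)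
  next
    fix u v assume "u \<in> Smodel \<phi> m" "v \<in> Smodel \<phi> m"
    then obtain a b where "u = (\<lambda>z. \<Sum>j\<in>m. a j * \<phi> j z)" "v = (\<lambda>z. \<Sum>j\<in>m. b j * \<phi> j z)"
      unfolding Smodel_def by blast
    hence "u + v = (\<lambda>z. \<Sum>j\<in>m. (a j + b j) * \<phi> j z)"
      by (auto simp: fun_eq_iff distrib_right sum.distrib)
    thus "u + v \<in> Smodel \<phi> m" unfolding Smodel_def
      by (intro CollectI exI[of _ "\<lambda>j. a j + b j"]) simp
  next
    fix c u assume "u \<in> Smodel \<phi> m"
    then obtain a where "u = (\<lambda>z. \<Sum>j\<in>m. a j * \<phi> j z)" unfolding Smodel_def by blast
    hence "fscale c u = (\<lambda>z. \<Sum>j\<in>m. (c * a j) * \<phi> j z)"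
      by (auto simp: fun_eq_iff fscale_def sum_distrib_left mult.assoc)
    thus "fscale c u \<in> Smodel \<phi> m" unfolding Smodel_def
      by (intro CollectI exI[of _ "\<lambda>j. c * a j"]) simp
  qed
  have "\<phi> ` m \<subseteq> Smodel \<phi> m"
  proof
    fix v assume "v \<in> \<phi> ` m"
    then obtain j where j: "j \<in> m" "v = \<phi> j" by blast
    have "v = (\<lambda>z. \<Sum>j'\<in>m. (if j' = j then 1 else 0) * \<phi> j' z)"
    proof (rule ext)
      fix z
      have "(\<Sum>j'\<in>m. (if j' = j then 1 else 0) * \<phi> j' z) = (\<Sum>j'\<in>m. if j' = j then \<phi> j' z else 0)"
        by (intro sum.cong refl) auto
      also have "\<dots> = \<phi> j z" using j assms by simp
      finally show "v z = (\<Sum>j'\<in>m. (if j' = j then 1 else 0) * \<phi> j' z)" using j by simp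
    qed
    thus "v \<in> Smodel \<phi> m" unfolding Smodel_def
      by (intro CollectI exI[of _ "\<lambda>j'. if j' = j then 1 else 0"]) simp
  qed
  thus "fvs.span (\<phi> ` m) \<subseteq> Smodel \<phi> m" using sub by (rule fvs.span_minimal)
qed

lemma lsd_Smodel:
  assumes "finite m"
  shows "lin_space_dim (Smodel \<phi> m) (Dm \<phi> m)"
  unfolding lin_space_dim_def Smodel_span[OF assms] Dm_def
  using assms by blast

theorem lemma6p3:
  fixes n :: nat and x :: "nat \<Rightarrow> 'x" and f0 :: "'x \<Rightarrow> real" and C0 :: real
  assumes "C0 > 0" and "n > 0"
  shows "(\<forall>(S :: ('x \<Rightarrow> real) set) S' D D' t.
            lin_space_dim S D \<and> lin_space_dim S' D' \<and> t \<ge> 0 \<longrightarrow>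
            measure_pmf.prob (sample_law n x f0)
              {\<omega>. sup_ratio n x (eps x f0 \<omega>) (msum (S \<inter> Linf n x C0) (S' \<inter> Linf n x C0))
                   > ereal (sqrt (real (D + D') / (4 * real n)) + sqrt (5 * t / real n))}
            \<le> exp (- t))
       \<and> (\<forall>(\<phi> :: nat \<Rightarrow> 'x \<Rightarrow> real) (M :: nat) (L :: nat set \<Rightarrow> real) \<xi> m.
            (\<forall>m'\<in>Pow {1..M}. L m' > 0) \<and> \<xi> > 0 \<and> m \<in> Pow {1..M} \<longrightarrow>
            measure_pmf.prob (sample_law n x f0)
              (\<Inter>m'\<in>Pow {1..M}.
                 {\<omega>. sup_ratio n x (eps x f0 \<omega>) (msum (Smodel \<phi> m \<inter> Linf n x C0) (Smodel \<phi> m' \<inter> Linf n x C0))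
                      \<le> ereal (sqrt (real (Dm \<phi> m + Dm \<phi> m') / (4 * real n))
                               + sqrt (5 * (L m' * real (Dm \<phi> m') + \<xi>) / real n))})
            \<ge> 1 - (\<Sum>m'\<in>Pow {1..M}. exp (- L m' * real (Dm \<phi> m'))) * exp (- \<xi>))"
proof (intro conjI allI impI)
  fix S S' :: "('x \<Rightarrow> real) set" and D D' :: nat and t :: real
  assume "lin_space_dim S D \<and> lin_space_dim S' D' \<and> t \<ge> 0"
  thus "measure_pmf.prob (sample_law n x f0)
              {\<omega>. sup_ratio n x (eps x f0 \<omega>) (msum (S \<inter> Linf n x C0) (S' \<inter> Linf n x C0))
                   > ereal (sqrt (real (D + D') / (4 * real n)) + sqrt (5 * t / real n))}
            \<le> exp (- t)"
    using part1[OF assms(2)] by blast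
next
  fix \<phi> :: "nat \<Rightarrow> 'x \<Rightarrow> real" and M :: nat and L :: "nat set \<Rightarrow> real" and \<xi> :: real and m :: "nat set"
  assume a: "(\<forall>m'\<in>Pow {1..M}. L m' > 0) \<and> \<xi> > 0 \<and> m \<in> Pow {1..M}"
  define I where "I = Pow {1..M}"
  define A where "A m' = {\<omega>. sup_ratio n x (eps x f0 \<omega>) (msum (Smodel \<phi> m \<inter> Linf n x C0) (Smodel \<phi> m' \<inter> Linf n x C0))
                      \<le> ereal (sqrt (real (Dm \<phi> m + Dm \<phi> m') / (4 * real n))
                               + sqrt (5 * (L m' * real (Dm \<phi> m') + \<xi>) / real n))}" for m'
  let ?P = "measure_pmf (sample_law n x f0)"
  have fI: "finite I" unfolding I_def by simp
  have fm: "finite m" using a finite_subset[of m "{1..M}"] by auto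
  have compl: "measure ?P (UNIV - A m') \<le> exp (- L m' * real (Dm \<phi> m')) * exp (- \<xi>)" if m': "m' \<in> I" for m'
  proof -
    have fm': "finite m'" using m' finite_subset[of m' "{1..M}"] by (auto simp: I_def)
    have t: "L m' * real (Dm \<phi> m') + \<xi> \<ge> 0" 
    proof -
      have "L m' > 0" using a m' by (auto simp: I_def)
      thus ?thesis using a by (intro add_nonneg_nonneg mult_nonneg_nonneg) auto
    qed
    have "UNIV - A m' = {\<omega>. sup_ratio n x (eps x f0 \<omega>) (msum (Smodel \<phi> m \<inter> Linf n x C0) (Smodel \<phi> m' \<inter> Linf n x C0))
                   > ereal (sqrt (real (Dm \<phi> m + Dm \<phi> m') / (4 * real n)) + sqrt (5 * (L m' * real (Dm \<phi> m') + \<xi>) / real n))}"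
      unfolding A_def by (auto simp: not_le)
    hence "measure ?P (UNIV - A m') \<le> exp (- (L m' * real (Dm \<phi> m') + \<xi>))"
      using part1[OF assms(2) lsd_Smodel[OF fm] lsd_Smodel[OF fm'] t] by simp
    also have "\<dots> = exp (- L m' * real (Dm \<phi> m')) * exp (- \<xi>)"
      by (simp add: exp_add[symmetric])
    finally show ?thesis .
  qed
  have "measure ?P (\<Union>m'\<in>I. UNIV - A m') \<le> (\<Sum>m'\<in>I. measure ?P (UNIV - A m'))"
    by (rule measure_pmf.finite_measure_subadditive_finite[OF fI]) simp
  also have "\<dots> \<le> (\<Sum>m'\<in>I. exp (- L m' * real (Dm \<phi> m')) * exp (- \<xi>))"
    by (rule sum_mono) (rule compl)
  also have "\<dots> = (\<Sum>m'\<in>I. exp (- L m' * real (Dm \<phi> m'))) * exp (- \<xi>)"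
    by (simp add: sum_distrib_right)
  finally have U: "measure ?P (\<Union>m'\<in>I. UNIV - A m') \<le> (\<Sum>m'\<in>I. exp (- L m' * real (Dm \<phi> m'))) * exp (- \<xi>)" .
  have eq: "(\<Inter>m'\<in>I. A m') = space ?P - (\<Union>m'\<in>I. UNIV - A m')" by auto
  have "measure ?P (\<Inter>m'\<in>I. A m') = 1 - measure ?P (\<Union>m'\<in>I. UNIV - A m')"
    unfolding eq by (subst measure_pmf.finite_measure_compl) (auto simp: measure_pmf.prob_space)
  hence "measure ?P (\<Inter>m'\<in>I. A m') \<ge> 1 - (\<Sum>m'\<in>I. exp (- L m' * real (Dm \<phi> m'))) * exp (- \<xi>)"
    using U by linarith
  thus "measure_pmf.prob (sample_law n x f0)
              (\<Inter>m'\<in>Pow {1..M}.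
                 {\<omega>. sup_ratio n x (eps x f0 \<omega>) (msum (Smodel \<phi> m \<inter> Linf n x C0) (Smodel \<phi> m' \<inter> Linf n x C0))
                      \<le> ereal (sqrt (real (Dm \<phi> m + Dm \<phi> m') / (4 * real n))
                               + sqrt (5 * (L m' * real (Dm \<phi> m') + \<xi>) / real n))})
            \<ge> 1 - (\<Sum>m'\<in>Pow {1..M}. exp (- L m' * real (Dm \<phi> m'))) * exp (- \<xi>)"
    unfolding A_def I_def .
qed

end
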